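(* Fix an integer $r\ge 2$. For every constant $C>(2^r e r)^{1/(r-1)}$ there is a constant $A>0$ such that the following holds. Let $(H(n))_n$ be a sequence of linear $r$-uniform hypergraphs, $H(n)$ having $n$ vertices and maximum degree $\Delta=\Delta(n)$, and let $k=k(n)$, $\sigma=\sigma(n)$ be integers with $k\le\sigma$, $k\ge A(\log n)^{1/r}$ and $\sigma\ge C\Delta^{1/(r-1)}$. If $L$ is a random $(k,\sigma)$-list assignment for $H(n)$, then $\mathbb{P}[H(n)\text{ is }L\text{-colorable}]\to 1$ as $n\to\infty$.
   Context: A hypergraph is linear if any two distinct vertices lie in at most one common edge. A random $(k,\sigma)$-list assignment $L$ for $H$ is obtained by choosing, for each vertex $v$ independently, the list $L(v)$ uniformly at random among all $k$-element subsets of $\{1,\dots,\sigma\}$. $H$ is $L$-colorable if there is a map $\varphi$ with $\varphi(v)\in L(v)$ for all $v$ such that no edge is monochromatic. $\log$ is the natural logarithm. *)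

theory Defs
  imports "HOL-Probability.Probability"
begin

definition uniform_hypergraph :: "nat \<Rightarrow> 'a set \<Rightarrow> 'a set set \<Rightarrow> bool" where
  "uniform_hypergraph r V E \<longleftrightarrow> finite V \<and> (\<forall>e\<in>E. e \<subseteq> V \<and> card e = r)"

definition linear_hypergraph :: "'a set set \<Rightarrow> bool" where
  "linear_hypergraph E \<longleftrightarrow>
     (\<forall>u v. u \<noteq> v \<longrightarrow> card {e\<in>E. u \<in> e \<and> v \<in> e} \<le> 1)"

definition hdegree :: "'a set set \<Rightarrow> 'a \<Rightarrow> nat" where
  "hdegree E v = card {e\<in>E. v \<in> e}"

text \<open>Maximum degree (0 for the empty vertex set).\<close>
definition max_degree :: "'a set \<Rightarrow> 'a set set \<Rightarrow> nat" where
  "max_degree V E = Max (insert 0 (hdegree E ` V))"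

definition L_colorable :: "'a set \<Rightarrow> 'a set set \<Rightarrow> ('a \<Rightarrow> nat set) \<Rightarrow> bool" where
  "L_colorable V E L \<longleftrightarrow>
     (\<exists>\<phi>. (\<forall>v\<in>V. \<phi> v \<in> L v) \<and> (\<forall>e\<in>E. \<not> (\<exists>c. \<forall>v\<in>e. \<phi> v = c)))"

text \<open>Random (k,sigma)-list assignment: independent uniform k-subsets of {1..sigma}
  for each vertex (value {} outside V).\<close>
definition random_list_assignment :: "'a set \<Rightarrow> nat \<Rightarrow> nat \<Rightarrow> ('a \<Rightarrow> nat set) pmf" where
  "random_list_assignment V k \<sigma> =
     Pi_pmf V {} (\<lambda>v. pmf_of_set {S. S \<subseteq> {1..\<sigma>} \<and> card S = k})"

end

theory Submission
  imports Defs
begin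


definition avoid :: "('i \<Rightarrow> 'x set) \<Rightarrow> 'i set \<Rightarrow> 'x set" where
  "avoid B S = {\<omega>. \<forall>j\<in>S. \<omega> \<notin> B j}"

lemma avoid_insert: "avoid B (insert j S) = avoid B S - B j"
  by (auto simp: avoid_def)

lemma avoid_empty[simp]: "avoid B {} = UNIV"
  by (auto simp: avoid_def)

lemma avoid_anti: "S \<subseteq> T \<Longrightarrow> avoid B T \<subseteq> avoid B S"
  by (auto simp: avoid_def)

lemma lll_chain:
  fixes M :: "'x pmf" and B :: "'i \<Rightarrow> 'x set"
  assumes "finite U" "T \<inter> U = {}"
    and x: "\<And>j. j \<in> U \<Longrightarrow> 0 \<le> x j \<and> x j \<le> 1"
    and H: "\<And>S' j. T \<subseteq> S' \<Longrightarrow> S' \<subset> T \<union> U \<Longrightarrow> j \<in> (T \<union> U) - S' \<Longrightarrow>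
            measure_pmf.prob M (B j \<inter> avoid B S') \<le> x j * measure_pmf.prob M (avoid B S')"
  shows "measure_pmf.prob M (avoid B (T \<union> U)) \<ge> measure_pmf.prob M (avoid B T) * (\<Prod>j\<in>U. 1 - x j)"
  using assms(1,2,3,4)
proof (induction U rule: finite_induct)
  case empty
  then show ?case by simp
next
  case (insert j U)
  have IH: "measure_pmf.prob M (avoid B (T \<union> U)) \<ge> measure_pmf.prob M (avoid B T) * (\<Prod>j\<in>U. 1 - x j)"
  proof (rule insert.IH)
    show "T \<inter> U = {}" using insert.prems by auto
    show "0 \<le> x j' \<and> x j' \<le> 1" if "j' \<in> U" for j' using insert.prems that by auto
    show "measure_pmf.prob M (B j' \<inter> avoid B S') \<le> x j' * measure_pmf.prob M (avoid B S')"
      if "T \<subseteq> S'" "S' \<subset> T \<union> U" "j' \<in> T \<union> U - S'" for S' j'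
      apply (rule insert.prems(3)) using that by auto
  qed
  have h: "measure_pmf.prob M (B j \<inter> avoid B (T \<union> U)) \<le> x j * measure_pmf.prob M (avoid B (T \<union> U))"
    apply (rule insert.prems(3))
    using insert.prems insert.hyps by auto
  have eq: "avoid B (T \<union> insert j U) = avoid B (T \<union> U) - (B j \<inter> avoid B (T \<union> U))"
    by (auto simp: avoid_def)
  have "measure_pmf.prob M (avoid B (T \<union> insert j U)) =
        measure_pmf.prob M (avoid B (T \<union> U)) - measure_pmf.prob M (B j \<inter> avoid B (T \<union> U))"
    unfolding eq by (rule measure_pmf.finite_measure_Diff) auto
  also have "\<dots> \<ge> (1 - x j) * measure_pmf.prob M (avoid B (T \<union> U))"
    using h by (simp add: algebra_simps)
  finally have a: "measure_pmf.prob M (avoid B (T \<union> insert j U)) \<ge> (1 - x j) * measure_pmf.prob M (avoid B (T \<union> U))" .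
  have xj: "0 \<le> 1 - x j" using insert.prems(2) by auto
  have "(1 - x j) * measure_pmf.prob M (avoid B (T \<union> U)) \<ge> (1 - x j) * (measure_pmf.prob M (avoid B T) * (\<Prod>j\<in>U. 1 - x j))"
    using IH xj by (rule mult_left_mono)
  then show ?case using a insert.hyps by (simp add: algebra_simps)
qed

lemma lll:
  fixes M :: "'x pmf" and B :: "'i \<Rightarrow> 'x set" and I :: "'i set"
  assumes fin: "finite I"
    and NI: "\<And>i. i \<in> I \<Longrightarrow> N i \<subseteq> I"
    and indep: "\<And>i S. i \<in> I \<Longrightarrow> S \<subseteq> I - N i - {i} \<Longrightarrow>
        measure_pmf.prob M (B i \<inter> avoid B S) \<le> measure_pmf.prob M (B i) * measure_pmf.prob M (avoid B S)"
    and x: "\<And>i. i \<in> I \<Longrightarrow> 0 \<le> x i \<and> x i < 1"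
    and cond: "\<And>i. i \<in> I \<Longrightarrow> measure_pmf.prob M (B i) \<le> x i * (\<Prod>j\<in>N i - {i}. (1 - x j))"
  shows "measure_pmf.prob M (avoid B I) > 0"
proof -
  have claim: "\<forall>S i. S \<subseteq> I \<longrightarrow> card S = m \<longrightarrow> i \<in> I - S \<longrightarrow>
     measure_pmf.prob M (B i \<inter> avoid B S) \<le> x i * measure_pmf.prob M (avoid B S)" for m
  proof (induction m rule: less_induct)
    case (less m)
    show ?case
    proof (intro allI impI)
      fix S i assume S: "S \<subseteq> I" "card S = m" "i \<in> I - S"
      define S1 where "S1 = S \<inter> N i"
      define S2 where "S2 = S - N i"
      have finS: "finite S" using S fin finite_subset by blast
      have S12: "S = S2 \<union> S1" "S2 \<inter> S1 = {}" unfolding S1_def S2_def by auto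
      have "measure_pmf.prob M (B i \<inter> avoid B S) \<le> measure_pmf.prob M (B i \<inter> avoid B S2)"
        by (rule measure_pmf.finite_measure_mono) (auto simp: avoid_def S2_def)
      also have "\<dots> \<le> measure_pmf.prob M (B i) * measure_pmf.prob M (avoid B S2)"
        apply (rule indep) using S by (auto simp: S2_def)
      also have "\<dots> \<le> x i * (\<Prod>j\<in>N i - {i}. (1 - x j)) * measure_pmf.prob M (avoid B S2)"
        by (rule mult_right_mono) (use cond S in auto)
      also have "(\<Prod>j\<in>N i - {i}. (1 - x j)) \<le> (\<Prod>j\<in>S1. (1 - x j))"
      proof -
        have fN: "finite (N i - {i})" using NI[of i] S fin finite_subset by blast
        have sub: "S1 \<subseteq> N i - {i}" using S unfolding S1_def by auto
        have "(\<Prod>j\<in>N i - {i}. (1 - x j)) = (\<Prod>j\<in>S1. (1 - x j)) * (\<Prod>j\<in>(N i - {i}) - S1. (1 - x j))"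
          using prod.subset_diff[OF sub fN] by (simp add: mult.commute)
        also have "\<dots> \<le> (\<Prod>j\<in>S1. (1 - x j)) * 1"
          apply (rule mult_left_mono)
           apply (rule prod_le_1) using NI[of i] x S apply (force simp: less_imp_le)
          apply (rule prod_nonneg) using NI[of i] x S sub by (force simp: less_imp_le)
        finally show ?thesis by simp
      qed
      then have "x i * (\<Prod>j\<in>N i - {i}. (1 - x j)) * measure_pmf.prob M (avoid B S2)
          \<le> x i * (\<Prod>j\<in>S1. (1 - x j)) * measure_pmf.prob M (avoid B S2)"
        using x S by (intro mult_right_mono mult_left_mono) auto
      also have "\<dots> \<le> x i * measure_pmf.prob M (avoid B S)"
      proof -
        have "measure_pmf.prob M (avoid B (S2 \<union> S1)) \<ge> measure_pmf.prob M (avoid B S2) * (\<Prod>j\<in>S1. 1 - x j)"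
        proof (rule lll_chain)
          show "finite S1" using finS S1_def by auto
          show "S2 \<inter> S1 = {}" by (rule S12(2))
          show "0 \<le> x j \<and> x j \<le> 1" if "j \<in> S1" for j using that x S S1_def by force
          show "measure_pmf.prob M (B j \<inter> avoid B S') \<le> x j * measure_pmf.prob M (avoid B S')"
            if "S2 \<subseteq> S'" "S' \<subset> S2 \<union> S1" "j \<in> S2 \<union> S1 - S'" for S' j
          proof -
            have "card S' < m" using that S12 S finS by (metis psubset_card_mono)
            moreover have "S' \<subseteq> I" "j \<in> I - S'" using that S12 S by auto
            ultimately show ?thesis using less.IH[of "card S'"] S by blast
          qed
        qed
        then show ?thesis using S12 x S by (simp add: algebra_simps mult_left_mono)
      qed
      finally show "measure_pmf.prob M (B i \<inter> avoid B S) \<le> x i * measure_pmf.prob M (avoid B S)" .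
    qed
  qed
  have "measure_pmf.prob M (avoid B ({} \<union> I)) \<ge> measure_pmf.prob M (avoid B {}) * (\<Prod>j\<in>I. 1 - x j)"
  proof (rule lll_chain)
    show "measure_pmf.prob M (B j \<inter> avoid B S') \<le> x j * measure_pmf.prob M (avoid B S')"
      if "{} \<subseteq> S'" "S' \<subset> {} \<union> I" "j \<in> {} \<union> I - S'" for S' j
      using claim[of "card S'"] that by auto
  qed (use fin x in \<open>auto simp: less_imp_le\<close>)
  moreover have "(\<Prod>j\<in>I. 1 - x j) > 0" using x by (intro prod_pos) auto
  ultimately show ?thesis by simp
qed



lemma prob_pair_times:
  "measure_pmf.prob (pair_pmf P Q) (X \<times> Y) = measure_pmf.prob P X * measure_pmf.prob Q Y"
proof -
  have "measure_pmf.prob (pair_pmf P Q) (X \<times> Y) = measure_pmf.prob (pair_pmf P Q) ((X \<times> Y) \<inter> set_pmf (pair_pmf P Q))"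
    by (rule measure_Int_set_pmf[symmetric])
  also have "(X \<times> Y) \<inter> set_pmf (pair_pmf P Q) = (X \<inter> set_pmf P) \<times> (Y \<inter> set_pmf Q)"
    by (auto simp: set_pair_pmf)
  also have "measure_pmf.prob (pair_pmf P Q) \<dots> = measure_pmf.prob P (X \<inter> set_pmf P) * measure_pmf.prob Q (Y \<inter> set_pmf Q)"
    by (rule measure_pmf_prob_product) (auto intro: countable_subset)
  also have "\<dots> = measure_pmf.prob P X * measure_pmf.prob Q Y"
    by (simp add: measure_Int_set_pmf)
  finally show ?thesis .
qed

lemma indep_Pi_pmf:
  assumes fin: "finite V" and AV: "A \<subseteq> V"
    and X: "\<And>\<phi> \<psi>. (\<forall>x\<in>A. \<phi> x = \<psi> x) \<Longrightarrow> (\<phi> \<in> X \<longleftrightarrow> \<psi> \<in> X)"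
    and Y: "\<And>\<phi> \<psi>. (\<forall>x\<in>V - A. \<phi> x = \<psi> x) \<Longrightarrow> (\<phi> \<in> Y \<longleftrightarrow> \<psi> \<in> Y)"
  shows "measure_pmf.prob (Pi_pmf V d p) (X \<inter> Y) =
         measure_pmf.prob (Pi_pmf V d p) X * measure_pmf.prob (Pi_pmf V d p) Y"
proof -
  define h where "h = (\<lambda>(f::'a \<Rightarrow> 'b, g::'a \<Rightarrow> 'b) x. if x \<in> A then f x else g x)"
  define P where "P = pair_pmf (Pi_pmf A d p) (Pi_pmf (V - A) d p)"
  have VV: "V = A \<union> (V - A)" using AV by auto
  have eq: "Pi_pmf V d p = map_pmf h P"
    unfolding P_def h_def by (subst VV, rule Pi_pmf_union) (use fin AV in \<open>auto intro: finite_subset\<close>)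
  have hX: "h (f, g) \<in> X \<longleftrightarrow> f \<in> X" for f g by (rule X) (auto simp: h_def)
  have hY: "h (f, g) \<in> Y \<longleftrightarrow> g \<in> Y" for f g by (rule Y) (auto simp: h_def)
  have 1: "h -` (X \<inter> Y) = X \<times> Y" using hX hY by auto
  have 2: "h -` X = X \<times> UNIV" using hX by auto
  have 3: "h -` Y = UNIV \<times> Y" using hY by auto
  show ?thesis unfolding eq measure_map_pmf 1 2 3 P_def prob_pair_times by simp
qed

lemma prod_ge_1_minus_sum:
  fixes a :: "'i \<Rightarrow> real"
  assumes "finite A" "\<And>i. i \<in> A \<Longrightarrow> 0 \<le> a i \<and> a i \<le> 1"
  shows "(\<Prod>i\<in>A. 1 - a i) \<ge> 1 - (\<Sum>i\<in>A. a i)"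
  using assms
proof (induction A rule: finite_induct)
  case (insert j A)
  have IH: "(\<Prod>i\<in>A. 1 - a i) \<ge> 1 - (\<Sum>i\<in>A. a i)" using insert by auto
  have p: "0 \<le> (\<Prod>i\<in>A. 1 - a i)" "(\<Prod>i\<in>A. 1 - a i) \<le> 1"
    using insert.prems by (auto intro!: prod_nonneg prod_le_1)
  have aj: "0 \<le> a j" "a j \<le> 1" using insert.prems by auto
  have s: "0 \<le> (\<Sum>i\<in>A. a i)" using insert.prems by (auto intro!: sum_nonneg)
  have "(1 - a j) * (\<Prod>i\<in>A. 1 - a i) \<ge> (1 - a j) * (1 - (\<Sum>i\<in>A. a i))"
    using IH aj by (intro mult_left_mono) auto
  moreover have "(1 - a j) * (1 - (\<Sum>i\<in>A. a i)) \<ge> 1 - (a j + (\<Sum>i\<in>A. a i))"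
    using aj s by (simp add: algebra_simps)
  ultimately show ?case using insert.hyps by simp
qed simp

lemma colorable_lll:
  fixes V :: "'a set" and E :: "'a set set" and L :: "'a \<Rightarrow> nat set" and k r :: nat
  assumes finV: "finite V" and edges: "\<And>e. e \<in> E \<Longrightarrow> e \<subseteq> V \<and> card e = r" and r2: "r \<ge> 2"
    and lists: "\<And>v. v \<in> V \<Longrightarrow> finite (L v) \<and> card (L v) = k" and k3: "k \<ge> 3"
    and cond: "\<And>e. e \<in> E \<Longrightarrow>
       real (\<Sum>f\<in>{f\<in>E. f \<noteq> e \<and> f \<inter> e \<noteq> {}}. card {c. \<forall>v\<in>f. c \<in> L v}) \<le> real k ^ r / 4"
  shows "L_colorable V E L"
proof -
  define Q where "Q = Pi_pmf V 0 (\<lambda>v. pmf_of_set (L v))"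
  define B where "B = (\<lambda>e::'a set. {\<phi>::'a \<Rightarrow> nat. \<exists>c. \<forall>v\<in>e. \<phi> v = c})"
  define N where "N = (\<lambda>e. {f\<in>E. f \<noteq> e \<and> f \<inter> e \<noteq> {}})"
  define I where "I = (\<lambda>f. {c. \<forall>v\<in>f. c \<in> L v})"
  define pe where "pe = (\<lambda>f. real (card (I f)) / real k ^ r)"
  define x where "x = (\<lambda>f. 2 * pe f)"
  have finE: "finite E"
    by (rule finite_subset[of _ "Pow V"]) (use edges finV in auto)
  have Lne: "L v \<noteq> {}" if "v \<in> V" for v using lists[OF that] k3 by auto
  have kpos: "real k > 0" using k3 by auto
  have setQ: "set_pmf Q = PiE_dflt V 0 (set_pmf \<circ> (\<lambda>v. pmf_of_set (L v)))"
    unfolding Q_def by (rule set_Pi_pmf[OF finV])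
  have inL: "\<phi> v \<in> L v" if "\<phi> \<in> set_pmf Q" "v \<in> V" for \<phi> v
    using that lists Lne unfolding setQ by (auto simp: PiE_dflt_def)
  have ne: "e \<noteq> {}" if "e \<in> E" for e using edges[OF that] r2 by auto
  have Isub: "I f \<subseteq> L v" if "v \<in> f" for f v using that unfolding I_def by auto
  have cardI: "card (I f) \<le> k" if fE: "f \<in> E" for f
  proof -
    obtain v where v: "v \<in> f" using ne[OF fE] by auto
    have "v \<in> V" using edges[OF fE] v by auto
    then show ?thesis using Isub[OF v] lists card_mono by metis
  qed
  have finI: "finite (I f)" if fE: "f \<in> E" for f
  proof -
    obtain v where v: "v \<in> f" using ne[OF fE] by auto
    have "v \<in> V" using edges[OF fE] v by auto
    then show ?thesis using Isub[OF v] lists finite_subset by metis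
  qed
  have kr: "real k ^ r \<ge> real k * real k" using k3 r2
    by (metis of_nat_le_iff of_nat_mult power2_eq_square power_increasing_iff le_trans of_nat_power
        nat_power_less_imp_less not_less one_le_numeral le_add2 numeral_3_eq_3 Suc_le_eq power_increasing)
  have pe_bound: "0 \<le> pe f \<and> pe f \<le> 1/3" if "f \<in> E" for f
  proof -
    have "pe f \<le> real k / (real k * real k)"
      unfolding pe_def using cardI[OF that] kr kpos
      by (intro frac_le) auto
    also have "\<dots> = 1 / real k" using kpos by simp
    also have "\<dots> \<le> 1/3" using k3 by (simp add: field_simps)
    finally show ?thesis unfolding pe_def by simp
  qed
  have probB: "measure_pmf.prob Q (B e) \<le> pe e" if e: "e \<in> E" for e
  proof -
    define P where "P = (\<lambda>c. {\<phi>::'a \<Rightarrow> nat. \<forall>v\<in>e. \<phi> v = c})"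
    have "measure_pmf.prob Q (B e) = measure_pmf.prob Q (B e \<inter> set_pmf Q)"
      by (rule measure_Int_set_pmf[symmetric])
    also have "\<dots> \<le> measure_pmf.prob Q (\<Union>c\<in>I e. P c)"
    proof (rule measure_pmf.finite_measure_mono)
      show "B e \<inter> set_pmf Q \<subseteq> (\<Union>c\<in>I e. P c)"
      proof
        fix \<phi> assume "\<phi> \<in> B e \<inter> set_pmf Q"
        then obtain c where c: "\<forall>v\<in>e. \<phi> v = c" and s: "\<phi> \<in> set_pmf Q" unfolding B_def by auto
        have "c \<in> I e" unfolding I_def using c inL[OF s] edges[OF e] by force
        then show "\<phi> \<in> (\<Union>c\<in>I e. P c)" using c unfolding P_def by auto
      qed
    qed auto
    also have "\<dots> \<le> (\<Sum>c\<in>I e. measure_pmf.prob Q (P c))"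
      by (rule measure_pmf.finite_measure_subadditive_finite) (use finI[OF e] in auto)
    also have "\<dots> = (\<Sum>c\<in>I e. 1 / real k ^ r)"
    proof (rule sum.cong[OF refl])
      fix c assume c: "c \<in> I e"
      have "P c = Pi V (\<lambda>v. if v \<in> e then {c} else UNIV)"
        unfolding P_def using edges[OF e] by (auto simp: Pi_def)
      then have "measure_pmf.prob Q (P c) = (\<Prod>v\<in>V. measure_pmf.prob (pmf_of_set (L v)) (if v \<in> e then {c} else UNIV))"
        unfolding Q_def by (simp add: measure_Pi_pmf_Pi[OF finV])
      also have "\<dots> = (\<Prod>v\<in>V. if v \<in> e then 1 / real k else 1)"
      proof (rule prod.cong[OF refl])
        fix v assume v: "v \<in> V"
        show "measure_pmf.prob (pmf_of_set (L v)) (if v \<in> e then {c} else UNIV) = (if v \<in> e then 1 / real k else 1)"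
        proof (cases "v \<in> e")
          case True
          then have "c \<in> L v" using c unfolding I_def by auto
          then show ?thesis using True lists[OF v] Lne[OF v] by (simp add: measure_pmf_of_set)
        qed simp
      qed
      also have "\<dots> = (\<Prod>v\<in>e. 1 / real k)"
        using prod.inter_filter[OF finV, of "\<lambda>v. 1 / real k" "\<lambda>v. v \<in> e", symmetric] edges[OF e]
        by (simp add: Int_absorb1 Collect_mem_eq inf.absorb_iff2 Int_def) 
      also have "\<dots> = 1 / real k ^ r" using edges[OF e] by (simp add: power_one_over)
      finally show "measure_pmf.prob Q (P c) = 1 / real k ^ r" .
    qed
    also have "\<dots> = pe e" unfolding pe_def by simp
    finally show ?thesis .
  qed
  have "measure_pmf.prob Q (avoid B E) > 0"
  proof (rule lll[where N = N and x = x])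
    show "finite E" by (rule finE)
    show "N i \<subseteq> E" for i unfolding N_def by auto
    show "0 \<le> x i \<and> x i < 1" if "i \<in> E" for i using pe_bound[OF that] unfolding x_def by auto
  next
    fix e S assume e: "e \<in> E" and S: "S \<subseteq> E - N e - {e}"
    have "measure_pmf.prob Q (B e \<inter> avoid B S) = measure_pmf.prob Q (B e) * measure_pmf.prob Q (avoid B S)"
      unfolding Q_def
    proof (rule indep_Pi_pmf[OF finV])
      show "e \<subseteq> V" using edges[OF e] by auto
      show "(\<phi> \<in> B e) = (\<psi> \<in> B e)" if "\<forall>x\<in>e. \<phi> x = \<psi> x" for \<phi> \<psi>
        using that unfolding B_def by auto
      show "(\<phi> \<in> avoid B S) = (\<psi> \<in> avoid B S)" if h: "\<forall>x\<in>V - e. \<phi> x = \<psi> x" for \<phi> \<psi>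
      proof -
        have "\<phi> \<in> B f \<longleftrightarrow> \<psi> \<in> B f" if f: "f \<in> S" for f
        proof -
          have "f \<subseteq> V - e" using f S edges unfolding N_def by blast
          then have "\<forall>v\<in>f. \<phi> v = \<psi> v" using h by auto
          then show ?thesis unfolding B_def mem_Collect_eq by (intro iffI) fastforce+
        qed
        then show ?thesis unfolding avoid_def by auto
      qed
    qed
    then show "measure_pmf.prob Q (B e \<inter> avoid B S) \<le> measure_pmf.prob Q (B e) * measure_pmf.prob Q (avoid B S)" by simp
  next
    fix e assume e: "e \<in> E"
    have NE: "N e - {e} = N e" unfolding N_def by auto
    have finN: "finite (N e)" using finE unfolding N_def by auto
    have "(\<Sum>f\<in>N e. x f) = 2 / real k ^ r * real (\<Sum>f\<in>N e. card (I f))"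
      unfolding x_def pe_def by (simp add: sum_distrib_left)
    also have "\<dots> \<le> 2 / real k ^ r * (real k ^ r / 4)"
      using cond[OF e] unfolding N_def I_def by (intro mult_left_mono) auto
    also have "\<dots> = 1/2" using kpos by simp
    finally have sx: "(\<Sum>f\<in>N e. x f) \<le> 1/2" .
    have "(\<Prod>f\<in>N e. 1 - x f) \<ge> 1 - (\<Sum>f\<in>N e. x f)"
      by (rule prod_ge_1_minus_sum[OF finN]) (use pe_bound in \<open>fastforce simp: x_def N_def\<close>)
    then have p: "(\<Prod>f\<in>N e. 1 - x f) \<ge> 1/2" using sx by simp
    have "x e * (\<Prod>f\<in>N e. 1 - x f) \<ge> x e * (1/2)"
      using p pe_bound[OF e] unfolding x_def by (intro mult_left_mono) auto
    then show "measure_pmf.prob Q (B e) \<le> x e * (\<Prod>f\<in>N e - {e}. 1 - x f)"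
      using probB[OF e] unfolding NE x_def by simp
  qed
  then obtain \<phi> where \<phi>: "\<phi> \<in> set_pmf Q" "\<phi> \<in> avoid B E"
    using measure_pmf_zero_iff[of Q "avoid B E"] by auto
  show ?thesis unfolding L_colorable_def
  proof (intro exI[of _ \<phi>] conjI ballI)
    show "\<phi> v \<in> L v" if "v \<in> V" for v using inL[OF \<phi>(1) that] .
    show "\<not> (\<exists>c. \<forall>v\<in>e. \<phi> v = c)" if "e \<in> E" for e using \<phi>(2) that unfolding avoid_def B_def by auto
  qed
qed



lemma choose_ratio_le:
  assumes "s \<le> k" "k \<le> (n::nat)"
  shows "real (k choose s) * real n ^ s \<le> real (n choose s) * real k ^ s"
proof -
  have sn: "s \<le> n" using assms by auto
  have e1: "real (k choose s) = (\<Prod>i = 0..<s. real (k - i) / real (s - i))"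
    by (rule binomial_altdef_of_nat[OF assms(1)])
  have e2: "real (n choose s) = (\<Prod>i = 0..<s. real (n - i) / real (s - i))"
    by (rule binomial_altdef_of_nat[OF sn])
  have "real (k choose s) * real n ^ s = (\<Prod>i = 0..<s. real (k - i) / real (s - i) * real n)"
    unfolding e1 prod.distrib by simp
  also have "\<dots> \<le> (\<Prod>i = 0..<s. real (n - i) / real (s - i) * real k)"
  proof (rule prod_mono)
    fix i assume i: "i \<in> {0..<s}"
    have "real (k - i) * real n \<le> real (n - i) * real k"
      using i assms by (simp add: of_nat_diff algebra_simps mult_left_mono)
    then show "0 \<le> real (k - i) / real (s - i) * real n \<and>
          real (k - i) / real (s - i) * real n \<le> real (n - i) / real (s - i) * real k"
      by (auto simp: divide_simps mult.commute mult.left_commute)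
  qed
  also have "\<dots> = real (n choose s) * real k ^ s"
    unfolding e2 prod.distrib by simp
  finally show ?thesis .
qed

definition Kset :: "nat \<Rightarrow> nat \<Rightarrow> nat set set" where
  "Kset k \<sigma> = {S. S \<subseteq> {1..\<sigma>} \<and> card S = k}"

lemma Kset_finite: "finite (Kset k \<sigma>)"
  unfolding Kset_def by (rule finite_subset[of _ "Pow {1..\<sigma>}"]) auto

lemma Kset_card: "card (Kset k \<sigma>) = \<sigma> choose k"
  unfolding Kset_def using n_subsets[of "{1..\<sigma>}" k] by simp

lemma Kset_ne: "k \<le> \<sigma> \<Longrightarrow> Kset k \<sigma> \<noteq> {}"
  using Kset_card[of k \<sigma>] Kset_finite[of k \<sigma>] by auto

lemma card_supersets:
  assumes S: "S \<subseteq> {1..\<sigma>}" "card S = s" "s \<le> k"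
  shows "card {X \<in> Kset k \<sigma>. S \<subseteq> X} = (\<sigma> - s) choose (k - s)"
proof -
  have finS: "finite S" using S finite_subset by blast
  have "bij_betw (\<lambda>X. X - S) {X \<in> Kset k \<sigma>. S \<subseteq> X} {Y. Y \<subseteq> {1..\<sigma>} - S \<and> card Y = k - s}"
  proof (rule bij_betwI[where g = "\<lambda>Y. Y \<union> S"])
    show "(\<lambda>X. X - S) \<in> {X \<in> Kset k \<sigma>. S \<subseteq> X} \<rightarrow> {Y. Y \<subseteq> {1..\<sigma>} - S \<and> card Y = k - s}"
      using S finS by (auto simp: Kset_def card_Diff_subset)
    show "(\<lambda>Y. Y \<union> S) \<in> {Y. Y \<subseteq> {1..\<sigma>} - S \<and> card Y = k - s} \<rightarrow> {X \<in> Kset k \<sigma>. S \<subseteq> X}"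
    proof
      fix Y assume Y: "Y \<in> {Y. Y \<subseteq> {1..\<sigma>} - S \<and> card Y = k - s}"
      have finY: "finite Y" using Y finite_subset by blast
      have "card (Y \<union> S) = k - s + s" using Y finY finS assms by (subst card_Un_disjoint) auto
      then show "Y \<union> S \<in> {X \<in> Kset k \<sigma>. S \<subseteq> X}" using Y assms by (auto simp: Kset_def)
    qed
  qed auto
  then have "card {X \<in> Kset k \<sigma>. S \<subseteq> X} = card {Y. Y \<subseteq> {1..\<sigma>} - S \<and> card Y = k - s}"
    by (rule bij_betw_same_card)
  also have "\<dots> = card ({1..\<sigma>} - S) choose (k - s)" by (rule n_subsets) auto
  also have "card ({1..\<sigma>} - S) = \<sigma> - s" using S finS by (simp add: card_Diff_subset)
  finally show ?thesis .
qed

lemma prob_superset_le: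
  assumes S: "S \<subseteq> {1..\<sigma>}" and k: "k \<le> \<sigma>" "0 < \<sigma>"
  shows "measure_pmf.prob (pmf_of_set (Kset k \<sigma>)) {X. S \<subseteq> X} \<le> (real k / real \<sigma>) ^ card S"
proof -
  let ?s = "card S"
  have ne: "Kset k \<sigma> \<noteq> {}" using Kset_ne[OF k(1)] .
  have p: "measure_pmf.prob (pmf_of_set (Kset k \<sigma>)) {X. S \<subseteq> X} = real (card {X \<in> Kset k \<sigma>. S \<subseteq> X}) / real (\<sigma> choose k)"
    using ne Kset_finite by (simp add: measure_pmf_of_set Kset_card Int_def conj_commute)
  show ?thesis
  proof (cases "?s \<le> k")
    case False
    have "{X \<in> Kset k \<sigma>. S \<subseteq> X} = {}"
    proof (rule ccontr)
      assume "{X \<in> Kset k \<sigma>. S \<subseteq> X} \<noteq> {}"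
      then obtain X where "X \<in> Kset k \<sigma>" "S \<subseteq> X" by auto
      then have "?s \<le> k" unfolding Kset_def by (auto intro: card_mono finite_subset)
      then show False using False by simp
    qed
    then have "card {X \<in> Kset k \<sigma>. S \<subseteq> X} = 0" by (simp only: card.empty)
    then show ?thesis using p by simp
  next
    case True
    have c1: "card {X \<in> Kset k \<sigma>. S \<subseteq> X} = (\<sigma> - ?s) choose (k - ?s)"
      by (rule card_supersets[OF S refl True])
    have cm: "real (\<sigma> choose k) * real (k choose ?s) = real (\<sigma> choose ?s) * real ((\<sigma> - ?s) choose (k - ?s))"
      using choose_mult[OF True k(1)] by (metis of_nat_mult)
    have pos1: "real (\<sigma> choose k) > 0" using k by simp
    have pos2: "real (\<sigma> choose ?s) > 0" using k True by simp
    have "real ((\<sigma> - ?s) choose (k - ?s)) / real (\<sigma> choose k) = real (k choose ?s) / real (\<sigma> choose ?s)"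
      using cm pos1 pos2 by (simp add: field_simps)
    also have "\<dots> \<le> (real k / real \<sigma>) ^ ?s"
      using choose_ratio_le[OF True k(1)] pos2 k by (simp add: field_simps power_divide)
    finally show ?thesis using p c1 by simp
  qed
qed

lemma pow_div_fact_le_exp:
  assumes "(x::real) \<ge> 0"
  shows "x ^ n / fact n \<le> exp x"
proof -
  have "summable (\<lambda>n. x ^ n /\<^sub>R fact n)" using exp_converges sums_summable by blast
  then have "sum (\<lambda>n. x ^ n /\<^sub>R fact n) {n} \<le> suminf (\<lambda>n. x ^ n /\<^sub>R fact n)"
    by (rule sum_le_suminf) (use assms in auto)
  also have "\<dots> = exp x" using exp_converges sums_unique by metis
  finally show ?thesis by (simp add: divide_inverse_commute)
qed

lemma choose_le_exp:
  assumes "t > 0"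
  shows "real (N choose t) \<le> (exp 1 * real N / real t) ^ t"
proof -
  have "real (N choose t) * fact t \<le> real N ^ t"
    using binomial_fact_pow[of N t] by (metis of_nat_fact of_nat_le_iff of_nat_mult of_nat_power)
  then have a: "real (N choose t) \<le> real N ^ t / fact t" by (simp add: field_simps)
  have "real t ^ t / fact t \<le> exp (real t)" by (rule pow_div_fact_le_exp) auto
  then have "1 / fact t \<le> exp (real t) / real t ^ t" using assms by (simp add: field_simps)
  then have "real N ^ t / fact t \<le> real N ^ t * (exp (real t) / real t ^ t)"
    by (metis mult_left_mono times_divide_eq_right mult_1_right zero_le_power of_nat_0_le_iff)
  also have "\<dots> = (exp 1 * real N / real t) ^ t"
    by (simp add: power_divide power_mult_distrib exp_of_nat_mult[symmetric])
  finally show ?thesis using a by simp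
qed

lemma card_filter_sum:
  assumes "finite A"
  shows "real (card {x\<in>A. P x}) = (\<Sum>x\<in>A. if P x then 1 else 0)"
  using sum.inter_filter[OF assms, of "\<lambda>_. 1::real" P] by simp

definition Pairs :: "'a set set \<Rightarrow> nat \<Rightarrow> 'a \<Rightarrow> ('a \<Rightarrow> nat set) \<Rightarrow> ('a set \<times> nat) set" where
  "Pairs E \<sigma> v L = {(f,c). f \<in> E \<and> v \<in> f \<and> c \<in> {1..\<sigma>} \<and> (\<forall>u\<in>f. c \<in> L u)}"

lemma bad_prob:
  fixes V :: "'a set" and E :: "'a set set"
  assumes finV: "finite V" and edges: "\<And>e. e \<in> E \<Longrightarrow> e \<subseteq> V \<and> card e = r"
    and lin: "linear_hypergraph E" and v: "v \<in> V" and k: "k \<le> \<sigma>" "0 < \<sigma>"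
  shows "measure_pmf.prob (Pi_pmf V {} (\<lambda>_. pmf_of_set (Kset k \<sigma>))) {L. card (Pairs E \<sigma> v L) \<ge> t}
         \<le> real ((card {f\<in>E. v \<in> f} * k) choose t) * (real k / real \<sigma>) ^ ((r - 1) * t)"
proof -
  define P where "P = Pi_pmf V {} (\<lambda>_. pmf_of_set (Kset k \<sigma>))"
  define K where "K = Kset k \<sigma>"
  define F where "F = {f\<in>E. v \<in> f}"
  define WW :: "('a set \<times> nat) set set" where "WW = {W. W \<subseteq> F \<times> {1..\<sigma>} \<and> card W = t}"
  define Ev :: "('a set \<times> nat) set \<Rightarrow> ('a \<Rightarrow> nat set) set" where "Ev = (\<lambda>W. {L. \<forall>(f,c)\<in>W. \<forall>u\<in>f. c \<in> L u})"
  define Su :: "('a set \<times> nat) set \<Rightarrow> 'a \<Rightarrow> nat set" where "Su = (\<lambda>W u. {c. \<exists>f. (f,c) \<in> W \<and> u \<in> f})"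
  define pK where "pK = (\<lambda>S. measure_pmf.prob (pmf_of_set K) {X. S \<subseteq> X})"
  define q0 where "q0 = (real k / real \<sigma>) ^ ((r - 1) * t)"
  have finE: "finite E"
    by (rule finite_subset[of _ "Pow V"]) (use edges finV in auto)
  have finF: "finite F" unfolding F_def using finE by auto
  have finWW: "finite WW" unfolding WW_def
    by (rule finite_subset[of _ "Pow (F \<times> {1..\<sigma>})"]) (use finF in auto)
  have Kne: "K \<noteq> {}" "finite K" unfolding K_def using Kset_ne[OF k(1)] Kset_finite by auto
  have q0: "0 \<le> q0" unfolding q0_def by simp
  have kr: "real k / real \<sigma> \<le> 1" "0 \<le> real k / real \<sigma>" using k by auto
  have sub: "{L. card (Pairs E \<sigma> v L) \<ge> t} \<subseteq> (\<Union>W\<in>WW. Ev W)"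
  proof
    fix L assume "L \<in> {L. card (Pairs E \<sigma> v L) \<ge> t}"
    then have ct: "t \<le> card (Pairs E \<sigma> v L)" by simp
    obtain W where W: "W \<subseteq> Pairs E \<sigma> v L" "card W = t" "finite W"
      by (rule obtain_subset_with_card_n[OF ct])
    have "W \<in> WW" using W unfolding WW_def Pairs_def F_def by auto
    moreover have "L \<in> Ev W" using W unfolding Ev_def Pairs_def by auto
    ultimately show "L \<in> (\<Union>W\<in>WW. Ev W)" by auto
  qed
  have "measure_pmf.prob P {L. card (Pairs E \<sigma> v L) \<ge> t} \<le> measure_pmf.prob P (\<Union>W\<in>WW. Ev W)"
    by (rule measure_pmf.finite_measure_mono[OF sub]) auto
  also have "\<dots> \<le> (\<Sum>W\<in>WW. measure_pmf.prob P (Ev W))"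
    by (rule measure_pmf.finite_measure_subadditive_finite) (use finWW in auto)
  also have "\<dots> \<le> (\<Sum>W\<in>WW. pK (snd ` W) * q0)"
  proof (rule sum_mono)
    fix W assume W: "W \<in> WW"
    have WF: "W \<subseteq> F \<times> {1..\<sigma>}" "card W = t" using W unfolding WW_def by auto
    have finW: "finite W" using finite_subset[OF WF(1)] finF by blast
    have Sus: "Su W u \<subseteq> {1..\<sigma>}" for u using WF unfolding Su_def by auto
    have finSu: "finite (Su W u)" for u using Sus finite_subset by blast
    have "Ev W = Pi V (\<lambda>u. {X. Su W u \<subseteq> X})"
    proof (intro equalityI subsetI)
      fix L assume "L \<in> Ev W" then show "L \<in> Pi V (\<lambda>u. {X. Su W u \<subseteq> X})"
        unfolding Ev_def Su_def by auto
    next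
      fix L assume L: "L \<in> Pi V (\<lambda>u. {X. Su W u \<subseteq> X})"
      show "L \<in> Ev W" unfolding Ev_def
      proof (clarify)
        fix f c u assume fc: "(f, c) \<in> W" "u \<in> f"
        have "f \<in> E" using fc WF unfolding F_def by auto
        then have "u \<in> V" using edges fc by auto
        then have "Su W u \<subseteq> L u" using L by auto
        then show "c \<in> L u" using fc unfolding Su_def by auto
      qed
    qed
    then have "measure_pmf.prob P (Ev W) = (\<Prod>u\<in>V. pK (Su W u))"
      unfolding P_def pK_def K_def by (simp add: measure_Pi_pmf_Pi[OF finV])
    also have "\<dots> = pK (Su W v) * (\<Prod>u\<in>V - {v}. pK (Su W u))"
      using v finV by (simp add: prod.remove)
    also have "\<dots> \<le> pK (Su W v) * (\<Prod>u\<in>V - {v}. (real k / real \<sigma>) ^ card (Su W u))"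
      apply (rule mult_left_mono)
       apply (rule prod_mono)
      using prob_superset_le[OF Sus k] unfolding pK_def K_def apply auto[1]
      unfolding pK_def by simp
    also have "\<dots> \<le> pK (Su W v) * q0"
    proof (rule mult_left_mono)
      show "0 \<le> pK (Su W v)" unfolding pK_def by simp
    have "(\<Prod>u\<in>V - {v}. (real k / real \<sigma>) ^ card (Su W u)) = (real k / real \<sigma>) ^ (\<Sum>u\<in>V - {v}. card (Su W u))"
      by (simp add: power_sum)
    also have "\<dots> \<le> q0"
    proof -
      define Z where "Z = Sigma W (\<lambda>w. fst w - {v})"
      have cZ: "card Z = (r - 1) * t"
      proof -
        have "card Z = (\<Sum>w\<in>W. card (fst w - {v}))"
          unfolding Z_def using finW edges WF
          apply (intro card_SigmaI) using finW apply simp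
          using WF edges finite_subset[OF _ finV] unfolding F_def by fastforce
        also have "\<dots> = (\<Sum>w\<in>W. r - 1)"
        proof (rule sum.cong[OF refl])
          fix w assume "w \<in> W"
          then have "fst w \<in> E" "v \<in> fst w" using WF unfolding F_def by auto
          then show "card (fst w - {v}) = r - 1" using edges by (simp add: card_Diff_singleton)
        qed
        finally show ?thesis using WF by simp
      qed
      have inj: "inj_on (\<lambda>(w,u). (u, snd w)) Z"
      proof (rule inj_onI)
        fix a b assume a: "a \<in> Z" "b \<in> Z" "(\<lambda>(w,u). (u, snd w)) a = (\<lambda>(w,u). (u, snd w)) b"
        obtain f c u where A: "a = ((f,c),u)" by (metis prod.collapse)
        obtain f' c' u' where B: "b = ((f',c'),u')" by (metis prod.collapse)
        have cu: "c' = c" "u' = u" using a(3) A B by auto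
        have h: "(f,c) \<in> W" "u \<in> f" "u \<noteq> v" "(f',c) \<in> W" "u \<in> f'"
          using a(1,2) A B cu unfolding Z_def by auto
        have ff: "f \<in> E" "v \<in> f" "f' \<in> E" "v \<in> f'" using h WF unfolding F_def by auto
        have c1: "card {e\<in>E. u \<in> e \<and> v \<in> e} \<le> 1" using lin h(3) unfolding linear_hypergraph_def by auto
        have c2: "finite {e\<in>E. u \<in> e \<and> v \<in> e}" using finE by auto
        have c3: "f \<in> {e\<in>E. u \<in> e \<and> v \<in> e}" "f' \<in> {e\<in>E. u \<in> e \<and> v \<in> e}" using h ff by auto
        have "f = f'" using card_le_Suc0_iff_eq[OF c2] c1 c3 by auto
        then show "a = b" using A B cu by simp
      qed
      have img: "(\<lambda>(w,u). (u, snd w)) ` Z \<subseteq> Sigma (V - {v}) (Su W)"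
      proof
        fix y assume "y \<in> (\<lambda>(w,u). (u, snd w)) ` Z"
        then obtain a where a: "a \<in> Z" "y = (\<lambda>(w,u). (u, snd w)) a" by auto
        obtain f c u where A: "a = ((f,c),u)" by (metis prod.collapse)
        have h: "(f,c) \<in> W" "u \<in> f" "u \<noteq> v" using a A unfolding Z_def by auto
        then have "f \<in> E" using WF unfolding F_def by auto
        then have "u \<in> V" using edges h by auto
        then show "y \<in> Sigma (V - {v}) (Su W)" using h a A unfolding Su_def by auto
      qed
      have "(r - 1) * t \<le> card (Sigma (V - {v}) (Su W))"
        unfolding cZ[symmetric] using card_inj_on_le[OF inj img] finV finSu by auto
      also have "\<dots> = (\<Sum>u\<in>V - {v}. card (Su W u))"
        using finV finSu by (intro card_SigmaI) auto
      finally have "(r - 1) * t \<le> (\<Sum>u\<in>V - {v}. card (Su W u))" .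
      then show ?thesis unfolding q0_def using kr by (intro power_decreasing) auto
    qed
    finally show "(\<Prod>u\<in>V - {v}. (real k / real \<sigma>) ^ card (Su W u)) \<le> q0" .
    qed
    finally have "measure_pmf.prob P (Ev W) \<le> pK (Su W v) * q0" .
    moreover have "Su W v = snd ` W"
    proof (rule set_eqI)
      fix c show "c \<in> Su W v \<longleftrightarrow> c \<in> snd ` W"
      proof
        assume "c \<in> Su W v" then obtain f where "(f,c) \<in> W" unfolding Su_def by auto
        then show "c \<in> snd ` W" by (metis image_eqI snd_conv)
      next
        assume "c \<in> snd ` W" then obtain f where fc: "(f,c) \<in> W" by auto
        then have "v \<in> f" using WF unfolding F_def by auto
        then show "c \<in> Su W v" using fc unfolding Su_def by auto
      qed
    qed
    ultimately show "measure_pmf.prob P (Ev W) \<le> pK (snd ` W) * q0" by simp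
  qed
  also have "\<dots> = (\<Sum>W\<in>WW. pK (snd ` W)) * q0" by (simp add: sum_distrib_right)
  also have "(\<Sum>W\<in>WW. pK (snd ` W)) = real ((card F * k) choose t)"
  proof -
    have "(\<Sum>W\<in>WW. pK (snd ` W)) = (\<Sum>W\<in>WW. real (card {X\<in>K. snd ` W \<subseteq> X}) / real (card K))"
      unfolding pK_def using Kne by (simp add: measure_pmf_of_set Int_def conj_commute)
    also have "\<dots> = (\<Sum>W\<in>WW. \<Sum>X\<in>K. if snd ` W \<subseteq> X then 1 else 0) / real (card K)"
      unfolding sum_divide_distrib card_filter_sum[OF Kne(2)] ..
    also have "(\<Sum>W\<in>WW. \<Sum>X\<in>K. if snd ` W \<subseteq> X then 1 else 0) = (\<Sum>X\<in>K. \<Sum>W\<in>WW. if snd ` W \<subseteq> X then (1::real) else 0)"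
      by (rule sum.swap)
    also have "\<dots> = (\<Sum>X\<in>K. real ((card F * k) choose t))"
    proof (rule sum.cong[OF refl])
      fix X assume X: "X \<in> K"
      have XX: "X \<subseteq> {1..\<sigma>}" "card X = k" using X unfolding K_def Kset_def by auto
      have finX: "finite X" using XX finite_subset by blast
      have "{W\<in>WW. snd ` W \<subseteq> X} = {W. W \<subseteq> F \<times> X \<and> card W = t}"
        unfolding WW_def using XX by auto
      then have "card {W\<in>WW. snd ` W \<subseteq> X} = card (F \<times> X) choose t"
        using n_subsets[of "F \<times> X" t] finF finX by simp
      also have "\<dots> = (card F * k) choose t" using XX by (simp add: card_cartesian_product)
      finally have "card {W\<in>WW. snd ` W \<subseteq> X} = (card F * k) choose t" .
      then show "(\<Sum>W\<in>WW. if snd ` W \<subseteq> X then (1::real) else 0) = real ((card F * k) choose t)"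
        using card_filter_sum[OF finWW, of "\<lambda>W. snd ` W \<subseteq> X"] by simp
    qed
    also have "\<dots> / real (card K) = real ((card F * k) choose t)" using Kne by simp
    finally show ?thesis .
  qed
  finally show ?thesis unfolding P_def q0_def F_def .
qed



lemma main_bound:
  fixes V :: "nat set" and E :: "nat set set" and k \<sigma> r n :: nat and C A q :: real
  assumes r2: "r \<ge> 2" and Cpos: "C > 0"
    and qdef: "q * C ^ (r - 1) = 4 * exp 1 * real r" and q: "0 < q" "q < 1"
    and A3: "A \<ge> 3" and Aq: "A * (- ln q) \<ge> 8 * real r"
    and uni: "uniform_hypergraph r V E" and lin: "linear_hypergraph E" and cardV: "card V = n" and n3: "n \<ge> 3"
    and ksig: "k \<le> \<sigma>" and kA: "real k \<ge> A * ln (real n) powr (1 / real r)"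
    and sigC: "real \<sigma> \<ge> C * real (max_degree V E) powr (1 / (real r - 1))"
  shows "measure_pmf.prob (random_list_assignment V k \<sigma>) {L. L_colorable V E L} \<ge> 1 - 1 / real n"
proof -
  define \<Delta> where "\<Delta> = max_degree V E"
  define t where "t = k ^ r div (4 * r) + 1"
  define P where "P = Pi_pmf V {} (\<lambda>_. pmf_of_set (Kset k \<sigma>))"
  have P_eq: "random_list_assignment V k \<sigma> = P"
    unfolding random_list_assignment_def P_def Kset_def ..
  have finV: "finite V" using uni unfolding uniform_hypergraph_def by auto
  have edges: "\<And>e. e \<in> E \<Longrightarrow> e \<subseteq> V \<and> card e = r" using uni unfolding uniform_hypergraph_def by auto
  have finE: "finite E"
    by (rule finite_subset[of _ "Pow V"]) (use edges finV in auto)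
  have ln3: "ln (real n) \<ge> 1"
  proof -
    have "exp 1 \<le> real n" using exp_le n3 by linarith
    then show ?thesis using n3 by (subst ln_ge_iff) auto
  qed
  have lnpos: "ln (real n) > 0" using ln3 by simp
  have rpos: "real r > 0" using r2 by simp
  have powr1: "ln (real n) powr (1 / real r) \<ge> 1"
    using ln3 by (intro ge_one_powr_ge_zero) auto
  have "A * 1 \<le> A * ln (real n) powr (1 / real r)" using A3 powr1 by (intro mult_left_mono) auto
  then have k3: "real k \<ge> 3" using kA A3 by linarith
  then have k3n: "k \<ge> 3" by simp
  have sig3: "real \<sigma> \<ge> 3" using k3 ksig by linarith
  have sigpos: "0 < \<sigma>" using sig3 by simp
  have kr: "real k ^ r \<ge> A ^ r * ln (real n)"
  proof -
    have y: "(ln (real n) powr (1 / real r)) ^ r = ln (real n)"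
    proof -
      have "(ln (real n) powr (1 / real r)) ^ r = (ln (real n) powr (1 / real r)) powr (real r)"
        using lnpos by (simp add: powr_realpow)
      also have "\<dots> = ln (real n)" using rpos lnpos by (simp add: powr_powr)
      finally show ?thesis .
    qed
    have "(A * ln (real n) powr (1 / real r)) ^ r \<le> real k ^ r"
      using kA A3 by (intro power_mono) auto
    then show ?thesis unfolding power_mult_distrib y by simp
  qed
  have Ar: "A ^ r \<ge> A" using power_increasing[of 1 r A] A3 r2 by simp
  have t_ge: "real t \<ge> real k ^ r / (4 * real r)"
  proof -
    have m: "0 < 4 * r" using r2 by simp
    have e: "k ^ r = k ^ r div (4 * r) * (4 * r) + k ^ r mod (4 * r)" by (rule div_mult_mod_eq[symmetric])
    have "k ^ r mod (4 * r) < 4 * r" using m by simp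
    then have "k ^ r \<le> t * (4 * r)" unfolding t_def using e by (simp add: algebra_simps)
    then have "real (k ^ r) \<le> real (t * (4 * r))" by (simp only: of_nat_le_iff)
    then have "real (k ^ r) \<le> real t * (4 * real r)" by simp
    then show ?thesis using rpos by (simp add: field_simps)
  qed
  have t_le: "real r * (real t - 1) \<le> real k ^ r / 4"
  proof -
    have "(k ^ r div (4 * r)) * (4 * r) \<le> k ^ r" by (rule div_times_less_eq_dividend)
    then have "real ((k ^ r div (4 * r)) * (4 * r)) \<le> real (k ^ r)" by (simp only: of_nat_le_iff)
    then have "real (k ^ r div (4 * r)) * (4 * real r) \<le> real k ^ r" by simp
    then show ?thesis unfolding t_def by (simp add: field_simps)
  qed
  have tpos: "t > 0" unfolding t_def by simp
  have sigDelta: "real \<sigma> ^ (r - 1) \<ge> C ^ (r - 1) * real \<Delta>"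
  proof -
    have y: "(real \<Delta> powr (1 / (real r - 1))) ^ (r - 1) = real \<Delta>"
    proof (cases "\<Delta> = 0")
      case True then show ?thesis using r2 by simp
    next
      case False
      have "(real \<Delta> powr (1 / (real r - 1))) ^ (r - 1) = (real \<Delta> powr (1 / (real r - 1))) powr (real (r - 1))"
        using False by (simp add: powr_realpow)
      also have "\<dots> = real \<Delta>" using r2 False by (simp add: powr_powr of_nat_diff)
      finally show ?thesis .
    qed
    have "(C * real \<Delta> powr (1 / (real r - 1))) ^ (r - 1) \<le> real \<sigma> ^ (r - 1)"
      using sigC Cpos unfolding \<Delta>_def by (intro power_mono) auto
    then show ?thesis unfolding power_mult_distrib y by simp
  qed
  have bad_v: "measure_pmf.prob P {L. card (Pairs E \<sigma> v L) \<ge> t} \<le> q ^ t" if v: "v \<in> V" for v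
  proof -
    define d where "d = card {f\<in>E. v \<in> f}"
    have dDelta: "d \<le> \<Delta>"
    proof -
      have "d = hdegree E v" unfolding d_def hdegree_def ..
      also have "\<dots> \<le> Max (insert 0 (hdegree E ` V))" using finV v by (intro Max_ge) auto
      finally show ?thesis unfolding \<Delta>_def max_degree_def .
    qed
    have "measure_pmf.prob P {L. card (Pairs E \<sigma> v L) \<ge> t} \<le> real ((d * k) choose t) * (real k / real \<sigma>) ^ ((r - 1) * t)"
      unfolding P_def d_def by (rule bad_prob[OF finV edges lin v ksig sigpos])
    also have "\<dots> \<le> (exp 1 * real (d * k) / real t) ^ t * (real k / real \<sigma>) ^ ((r - 1) * t)"
      by (intro mult_right_mono choose_le_exp tpos) auto
    also have "\<dots> = (exp 1 * real (d * k) / real t * (real k / real \<sigma>) ^ (r - 1)) ^ t"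
      by (simp only: power_mult power_mult_distrib)
    also have "\<dots> \<le> q ^ t"
    proof (rule power_mono)
      have sr: "Suc (r - 1) = r" using r2 by simp
      have "real k * real k ^ (r - 1) = real k ^ Suc (r - 1)" by simp
      then have kk: "real k * real k ^ (r - 1) = real k ^ r" unfolding sr .
      have "exp 1 * real (d * k) / real t * (real k / real \<sigma>) ^ (r - 1)
            = exp 1 * real d * real k ^ r / (real t * real \<sigma> ^ (r - 1))"
        using kk by (simp add: power_divide field_simps)
      also have "\<dots> \<le> q"
      proof -
        have tp: "real t * real \<sigma> ^ (r - 1) > 0" using tpos sigpos by simp
        have "exp 1 * real d * real k ^ r = q * C ^ (r - 1) * real d * real k ^ r / (4 * real r)"
          using qdef rpos by (simp add: field_simps)
        also have "\<dots> = q * (real k ^ r / (4 * real r)) * (C ^ (r - 1) * real d)"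
          by (simp add: field_simps)
        also have "\<dots> \<le> q * real t * real \<sigma> ^ (r - 1)"
        proof -
          have "C ^ (r - 1) * real d \<le> C ^ (r - 1) * real \<Delta>" using dDelta Cpos by (intro mult_left_mono) auto
          also have "\<dots> \<le> real \<sigma> ^ (r - 1)" by (rule sigDelta)
          finally have a: "C ^ (r - 1) * real d \<le> real \<sigma> ^ (r - 1)" .
          have b: "q * (real k ^ r / (4 * real r)) \<le> q * real t" using t_ge q by (intro mult_left_mono) auto
          have "q * (real k ^ r / (4 * real r)) * (C ^ (r - 1) * real d) \<le> q * real t * (C ^ (r - 1) * real d)"
            using b Cpos by (intro mult_right_mono) auto
          also have "\<dots> \<le> q * real t * real \<sigma> ^ (r - 1)"
            using a q by (intro mult_left_mono) auto
          finally show ?thesis .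
        qed
        finally show ?thesis using tp by (simp add: field_simps)
      qed
      finally show "exp 1 * real (d * k) / real t * (real k / real \<sigma>) ^ (r - 1) \<le> q" .
      show "0 \<le> exp 1 * real (d * k) / real t * (real k / real \<sigma>) ^ (r - 1)" by simp
    qed
    finally show ?thesis .
  qed
  have qt: "q ^ t \<le> 1 / real n ^ 2"
  proof -
    have lq: "ln q < 0" using q by simp
    have "q ^ t = exp (real t * ln q)" using q by (simp add: exp_of_nat_mult exp_ln_iff)
    also have "\<dots> \<le> exp (real k ^ r / (4 * real r) * ln q)"
      using t_ge lq by (intro exp_mono mult_right_mono_neg) auto
    also have "\<dots> \<le> exp (A ^ r * ln (real n) / (4 * real r) * ln q)"
      using kr lq rpos by (intro exp_mono mult_right_mono_neg divide_right_mono) auto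
    also have "\<dots> \<le> exp (-2 * ln (real n))"
    proof (rule exp_mono)
      have "A ^ r * (- ln q) \<ge> A * (- ln q)" using Ar lq by (intro mult_right_mono) auto
      then have "A ^ r * (- ln q) \<ge> 8 * real r" using Aq by linarith
      then have "A ^ r * (- ln q) * ln (real n) \<ge> 8 * real r * ln (real n)" using lnpos by (intro mult_right_mono) auto
      then show "A ^ r * ln (real n) / (4 * real r) * ln q \<le> -2 * ln (real n)"
        using rpos by (simp add: field_simps)
    qed
    also have "\<dots> = 1 / real n ^ 2"
    proof -
      have np: "real n > 0" using n3 by simp
      have "exp (2 * ln (real n)) = exp (ln (real n ^ 2))" using np by (simp add: ln_realpow)
      also have "\<dots> = real n ^ 2" using np by simp
      finally have "exp (2 * ln (real n)) = real n ^ 2" .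
      then show ?thesis by (simp add: exp_minus field_simps)
    qed
    finally show ?thesis .
  qed
  have good: "L_colorable V E L" if L: "L \<in> set_pmf P" and G: "\<forall>v\<in>V. card (Pairs E \<sigma> v L) < t" for L
  proof (rule colorable_lll[OF finV edges r2 _ k3n])
    have LK: "L v \<in> Kset k \<sigma>" if "v \<in> V" for v
      using L that Kset_ne[OF ksig] Kset_finite unfolding P_def set_Pi_pmf[OF finV] by (auto simp: PiE_dflt_def)
    show "finite (L v) \<and> card (L v) = k" if "v \<in> V" for v
      using LK[OF that] unfolding Kset_def by (auto intro: finite_subset)
    fix e assume e: "e \<in> E"
    define N where "N = {f\<in>E. f \<noteq> e \<and> f \<inter> e \<noteq> {}}"
    define I where "I = (\<lambda>f. {c. \<forall>v\<in>f. c \<in> L v})"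
    have finN: "finite N" using finE unfolding N_def by auto
    have Isub: "I f \<subseteq> {1..\<sigma>}" if fE: "f \<in> E" for f
    proof -
      obtain v where v: "v \<in> f" using edges[OF fE] r2 by fastforce
      then have "v \<in> V" using edges[OF fE] by auto
      then show ?thesis using LK v unfolding I_def Kset_def by blast
    qed
    have finI: "finite (I f)" if "f \<in> E" for f using Isub[OF that] finite_subset by blast
    have "(\<Sum>f\<in>N. card (I f)) = card (Sigma N I)"
      using finN finI unfolding N_def by (intro card_SigmaI[symmetric]) auto
    also have "\<dots> \<le> card (\<Union>v\<in>e. Pairs E \<sigma> v L)"
    proof (rule card_mono)
      show "finite (\<Union>v\<in>e. Pairs E \<sigma> v L)"
      proof (rule finite_subset)
        show "(\<Union>v\<in>e. Pairs E \<sigma> v L) \<subseteq> E \<times> {1..\<sigma>}" unfolding Pairs_def by auto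
      qed (use finE in auto)
      show "Sigma N I \<subseteq> (\<Union>v\<in>e. Pairs E \<sigma> v L)"
      proof
        fix p assume "p \<in> Sigma N I"
        then obtain f c where p: "p = (f, c)" "f \<in> N" "c \<in> I f" by auto
        then obtain v where v: "v \<in> f" "v \<in> e" unfolding N_def by auto
        have "f \<in> E" using p unfolding N_def by auto
        then have "c \<in> {1..\<sigma>}" using Isub[OF \<open>f \<in> E\<close>] p by blast
        then show "p \<in> (\<Union>v\<in>e. Pairs E \<sigma> v L)" using p v \<open>f \<in> E\<close> unfolding Pairs_def I_def by auto
      qed
    qed
    also have "\<dots> \<le> (\<Sum>v\<in>e. card (Pairs E \<sigma> v L))" by (rule card_UN_le) (use edges[OF e] finV in \<open>auto intro: finite_subset\<close>)
    also have "\<dots> \<le> (\<Sum>v\<in>e. t - 1)"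
      by (rule sum_mono) (use G edges[OF e] in force)
    also have "\<dots> = r * (t - 1)" using edges[OF e] by simp
    finally have "real (\<Sum>f\<in>N. card (I f)) \<le> real (r * (t - 1))" by (simp only: of_nat_le_iff)
    then have "real (\<Sum>f\<in>N. card (I f)) \<le> real r * (real t - 1)"
      using tpos by (simp add: of_nat_diff)
    then show "real (\<Sum>f\<in>{f \<in> E. f \<noteq> e \<and> f \<inter> e \<noteq> {}}. card {c. \<forall>v\<in>f. c \<in> L v}) \<le> real k ^ r / 4"
      using t_le unfolding N_def I_def by linarith
  qed
  have "measure_pmf.prob P (\<Union>v\<in>V. {L. card (Pairs E \<sigma> v L) \<ge> t}) \<le> (\<Sum>v\<in>V. measure_pmf.prob P {L. card (Pairs E \<sigma> v L) \<ge> t})"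
    by (rule measure_pmf.finite_measure_subadditive_finite) (use finV in auto)
  also have "\<dots> \<le> (\<Sum>v\<in>V. q ^ t)" by (rule sum_mono) (rule bad_v)
  also have "\<dots> = real n * q ^ t" using cardV by simp
  also have "\<dots> \<le> real n * (1 / real n ^ 2)" using qt by (intro mult_left_mono) auto
  also have "\<dots> = 1 / real n" using n3 by (simp add: power2_eq_square)
  finally have badp: "measure_pmf.prob P (\<Union>v\<in>V. {L. card (Pairs E \<sigma> v L) \<ge> t}) \<le> 1 / real n" .
  have "1 - 1 / real n \<le> 1 - measure_pmf.prob P (\<Union>v\<in>V. {L. card (Pairs E \<sigma> v L) \<ge> t})"
    using badp by simp
  also have "\<dots> = measure_pmf.prob P (UNIV - (\<Union>v\<in>V. {L. card (Pairs E \<sigma> v L) \<ge> t}))"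
    using measure_pmf.prob_compl[of "(\<Union>v\<in>V. {L. card (Pairs E \<sigma> v L) \<ge> t})" P] by simp
  also have "\<dots> = measure_pmf.prob P ((UNIV - (\<Union>v\<in>V. {L. card (Pairs E \<sigma> v L) \<ge> t})) \<inter> set_pmf P)"
    by (rule measure_Int_set_pmf[symmetric])
  also have "\<dots> \<le> measure_pmf.prob P {L. L_colorable V E L}"
    by (rule measure_pmf.finite_measure_mono) (use good in \<open>auto simp: not_le\<close>)
  finally show ?thesis unfolding P_eq .
qed



theorem theorem4p1:
  fixes r :: nat and C :: real
  assumes "r \<ge> 2"
    and "C > (2 ^ r * exp 1 * real r) powr (1 / (real r - 1))"
  shows "\<exists>A::real. A > 0 \<and>
    (\<forall>(V :: nat \<Rightarrow> nat set) (E :: nat \<Rightarrow> nat set set) (k :: nat \<Rightarrow> nat) (\<sigma> :: nat \<Rightarrow> nat).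
       (\<forall>n. uniform_hypergraph r (V n) (E n) \<and> linear_hypergraph (E n) \<and> card (V n) = n
            \<and> k n \<le> \<sigma> n
            \<and> real (k n) \<ge> A * ln (real n) powr (1 / real r)
            \<and> real (\<sigma> n) \<ge> C * real (max_degree (V n) (E n)) powr (1 / (real r - 1)))
       \<longrightarrow> (\<lambda>n. measure_pmf.prob (random_list_assignment (V n) (k n) (\<sigma> n))
                 {L. L_colorable (V n) (E n) L}) \<longlonglongrightarrow> 1)"
proof -
  note r2 = assms(1)
  define X where "X = 2 ^ r * exp 1 * real r"
  have Xpos: "X > 0" unfolding X_def using r2 by simp
  have CX: "C > X powr (1 / (real r - 1))" using assms(2) unfolding X_def .
  have Cpos: "C > 0" using CX Xpos by (smt (verit) powr_gt_zero)
  have CrX: "C ^ (r - 1) > X"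
  proof -
    have "(X powr (1 / (real r - 1))) ^ (r - 1) < C ^ (r - 1)"
      using CX r2 by (intro power_strict_mono) auto
    moreover have "(X powr (1 / (real r - 1))) ^ (r - 1) = X"
    proof -
      have "(X powr (1 / (real r - 1))) ^ (r - 1) = (X powr (1 / (real r - 1))) powr (real (r - 1))"
        using Xpos by (simp add: powr_realpow)
      also have "\<dots> = X" using r2 Xpos by (simp add: powr_powr of_nat_diff)
      finally show ?thesis .
    qed
    ultimately show ?thesis by simp
  qed
  define q where "q = 4 * exp 1 * real r / C ^ (r - 1)"
  have Crpos: "C ^ (r - 1) > 0" using Cpos by simp
  have qdef: "q * C ^ (r - 1) = 4 * exp 1 * real r" unfolding q_def using Crpos Cpos by (simp add: field_simps)
  have qpos: "q > 0" unfolding q_def using Crpos r2 by simp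
  have q1: "q < 1"
  proof -
    have "(4::real) \<le> 2 ^ r" using r2 power_increasing[of 2 r "2::real"] by simp
    then have "4 * exp 1 * real r \<le> X" unfolding X_def using r2 by (intro mult_right_mono) auto
    then have "4 * exp 1 * real r < C ^ (r - 1)" using CrX by simp
    then show ?thesis unfolding q_def using Crpos by simp
  qed
  have lq: "- ln q > 0" using qpos q1 by simp
  define A where "A = max 3 (8 * real r / (- ln q))"
  have A3: "A \<ge> 3" unfolding A_def by simp
  have Aq: "A * (- ln q) \<ge> 8 * real r"
  proof -
    have "A \<ge> 8 * real r / (- ln q)" unfolding A_def by simp
    then have "A * (- ln q) \<ge> 8 * real r / (- ln q) * (- ln q)" using lq by (intro mult_right_mono) auto
    then show ?thesis using lq by simp
  qed
  show ?thesis
  proof (intro exI[of _ A] conjI allI impI)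
    show "A > 0" using A3 by simp
    fix V :: "nat \<Rightarrow> nat set" and E :: "nat \<Rightarrow> nat set set" and k :: "nat \<Rightarrow> nat" and \<sigma> :: "nat \<Rightarrow> nat"
    assume H: "\<forall>n. uniform_hypergraph r (V n) (E n) \<and> linear_hypergraph (E n) \<and> card (V n) = n
            \<and> k n \<le> \<sigma> n
            \<and> real (k n) \<ge> A * ln (real n) powr (1 / real r)
            \<and> real (\<sigma> n) \<ge> C * real (max_degree (V n) (E n)) powr (1 / (real r - 1))"
    define g where "g = (\<lambda>n. measure_pmf.prob (random_list_assignment (V n) (k n) (\<sigma> n))
                 {L. L_colorable (V n) (E n) L})"
    have low: "eventually (\<lambda>n. 1 - 1 / real n \<le> g n) sequentially"
      unfolding eventually_sequentially
    proof (intro exI[of _ 3] allI impI)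
      fix n :: nat assume n: "3 \<le> n"
      show "1 - 1 / real n \<le> g n" unfolding g_def
        by (rule main_bound[OF r2 Cpos qdef qpos q1 A3 Aq _ _ _ n]) (use H in auto)
    qed
    have up: "eventually (\<lambda>n. g n \<le> 1) sequentially" unfolding g_def by (simp add: measure_pmf.prob_le_1)
    have lim1: "(\<lambda>n. 1 - 1 / real n) \<longlonglongrightarrow> 1"
      using tendsto_diff[OF tendsto_const lim_1_over_n, of 1] by simp
    have "g \<longlonglongrightarrow> 1"
      by (rule tendsto_sandwich[OF low up lim1 tendsto_const])
    then show "(\<lambda>n. measure_pmf.prob (random_list_assignment (V n) (k n) (\<sigma> n))
                 {L. L_colorable (V n) (E n) L}) \<longlonglongrightarrow> 1" unfolding g_def .
  qed
qed

end
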